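(* Let $\Lambda\in\mathbb{R}^{p\times p}$ be a discrete-time interconnection. There exists $\alpha>0$ such that for every $Q:\mathbb{N}\to\overline{\mathcal Q}_n$, the solution of $\mathbf x^+=(I_{np}+(\Lambda-I_p)\otimes Q_k)\mathbf x$ satisfies $|\mathbf x(k)|\le\alpha|\mathbf x(0)|$ for all $k\in\mathbb{N}$.
   Context: $|\cdot|$ Euclidean / induced 2-norm; $\otimes$ Kronecker product; $\overline{\mathcal Q}_n$ the set of symmetric positive semidefinite $n\times n$ matrices $R$ with $|R|\le1$. A discrete-time interconnection is $\Lambda=[\lambda_{ij}]$ with $\lambda_{ij}\ge0$ and $\sum_j\lambda_{ij}=1$ for all $i$. Equivalently, with $\mathbf x=[x_1^T\cdots x_p^T]^T$, the system is $x_i^+=x_i+Q_k\sum_{j\ne i}\lambda_{ij}(x_j-x_i)$. *)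

theory Defs
  imports "HOL-Analysis.Analysis"
begin

text \<open>Kronecker product of a p x p matrix with an n x n matrix, indexed by pairs
  (block index, inner index); the stacked vector [x_1; ...; x_p] is real^('p \<times> 'n).\<close>
definition kron :: "real^'p^'p \<Rightarrow> real^'n^'n \<Rightarrow> real^('p \<times> 'n)^('p \<times> 'n)" where
  "kron A B = (\<chi> r. \<chi> c. A$(fst r)$(fst c) * B$(snd r)$(snd c))"

definition dt_interconnection :: "real^'p^'p \<Rightarrow> bool" where
  "dt_interconnection \<Lambda> \<longleftrightarrow> (\<forall>i j. 0 \<le> \<Lambda>$i$j) \<and> (\<forall>i. (\<Sum>j\<in>UNIV. \<Lambda>$i$j) = 1)"

definition Qbar :: "(real^'n^'n) set" where
  "Qbar = {R. transpose R = R \<and> (\<forall>v. 0 \<le> v \<bullet> (R *v v)) \<and> onorm (\<lambda>v. R *v v) \<le> 1}"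

end

theory Submission
  imports Defs "Jordan_Normal_Form.Jordan_Normal_Form_Existence"
begin

lemma mult_entry: "A \<in> carrier_mat n n \<Longrightarrow> B \<in> carrier_mat n n \<Longrightarrow> i<n \<Longrightarrow> j<n \<Longrightarrow>
   (A*B)$$(i,j) = (\<Sum>l<n. A$$(i,l) * B$$(l,j))"
  by (auto simp: scalar_prod_def lessThan_atLeast0 intro!: sum.cong)

definition bidiag :: "complex mat \<Rightarrow> nat \<Rightarrow> bool" where
 "bidiag J n \<longleftrightarrow> (\<forall>i<n. \<forall>j<n. (j \<noteq> i \<and> j \<noteq> Suc i \<longrightarrow> J$$(i,j) = 0) \<and>
     (j = Suc i \<longrightarrow> J$$(i,j) = 0 \<or> (J$$(i,j) = 1 \<and> J$$(j,j) = J$$(i,i))))"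

lemma jordan_bidiag: "bidiag (jordan_matrix n_as) (sum_list (map fst n_as))"
  unfolding bidiag_def
proof (induction n_as)
  case Nil
  then show ?case by simp
next
  case (Cons na n_as)
  obtain n a where na: "na = (n,a)" by force
  let ?N = "sum_list (map fst n_as)"
  show ?case
  proof (intro allI impI)
    fix i j assume i: "i < sum_list (map fst (na # n_as))" and j: "j < sum_list (map fst (na # n_as))"
    have ij: "i < n + ?N" "j < n + ?N" using i j na by auto
    have IH: "\<And>i j. i < ?N \<Longrightarrow> j < ?N \<Longrightarrow> (j \<noteq> i \<and> j \<noteq> Suc i \<longrightarrow> jordan_matrix n_as$$(i,j) = 0) \<and>
     (j = Suc i \<longrightarrow> jordan_matrix n_as$$(i,j) = 0 \<or> (jordan_matrix n_as$$(i,j) = 1 \<and> jordan_matrix n_as$$(j,j) = jordan_matrix n_as$$(i,i)))"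
      using Cons.IH by blast
    show "(j \<noteq> i \<and> j \<noteq> Suc i \<longrightarrow> jordan_matrix (na # n_as) $$ (i, j) = 0) \<and>
          (j = Suc i \<longrightarrow> jordan_matrix (na # n_as) $$ (i, j) = 0 \<or>
             jordan_matrix (na # n_as) $$ (i, j) = 1 \<and> jordan_matrix (na # n_as) $$ (j, j) = jordan_matrix (na # n_as) $$ (i, i))"
    proof (cases "i < n")
      case True
      then show ?thesis using ij unfolding na jordan_matrix_Cons by auto
    next
      case False
      then have "i - n < ?N" "j - n < ?N \<or> j < n" using ij by auto
      then show ?thesis using ij False IH[of "i-n" "j-n"] unfolding na jordan_matrix_Cons
        by (auto simp: Suc_diff_le)
    qed
  qed
qed

lemma sum_single: "finite A \<Longrightarrow> a \<in> A \<Longrightarrow> (\<And>l. l\<in>A \<Longrightarrow> l \<noteq> a \<Longrightarrow> f l = 0) \<Longrightarrow> sum f A = f a"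
  by (simp add: sum.remove)

lemma sum_two: "finite A \<Longrightarrow> a \<in> A \<Longrightarrow> b \<in> A \<Longrightarrow> a \<noteq> b \<Longrightarrow> (\<And>l. l\<in>A \<Longrightarrow> l \<noteq> a \<Longrightarrow> l \<noteq> b \<Longrightarrow> f l = 0) \<Longrightarrow> sum f A = f a + f b"
proof -
  assume *: "finite A" "a \<in> A" "b \<in> A" "a \<noteq> b" "\<And>l. l\<in>A \<Longrightarrow> l \<noteq> a \<Longrightarrow> l \<noteq> b \<Longrightarrow> f l = 0"
  have "sum f A = f a + sum f (A - {a})" using * by (simp add: sum.remove)
  also have "sum f (A - {a}) = f b" using * by (intro sum_single) auto
  finally show ?thesis .
qed

lemma bidiag_pow_lower:
  assumes J: "J \<in> carrier_mat n n" "bidiag J n"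
  shows "i<n \<Longrightarrow> j<n \<Longrightarrow> j < i \<Longrightarrow> (J ^\<^sub>m k)$$(i,j) = 0"
proof (induction k arbitrary: i j)
  case 0
  then show ?case using J by auto
next
  case (Suc k)
  have "(J ^\<^sub>m Suc k)$$(i,j) = (\<Sum>l<n. (J ^\<^sub>m k)$$(i,l) * J$$(l,j))"
    using mult_entry[of "J ^\<^sub>m k" n J i j] Suc.prems J by auto
  also have "\<dots> = 0"
  proof (intro sum.neutral ballI)
    fix l assume l: "l \<in> {..<n}"
    show "(J ^\<^sub>m k)$$(i,l) * J$$(l,j) = 0"
    proof (cases "l < i")
      case True
      then show ?thesis using Suc l by auto
    next
      case False
      then have "J$$(l,j) = 0" using J(2) Suc.prems l unfolding bidiag_def by auto
      then show ?thesis by simp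
    qed
  qed
  finally show ?case .
qed

lemma bidiag_pow_diag:
  assumes J: "J \<in> carrier_mat n n" "bidiag J n"
  shows "i<n \<Longrightarrow> (J ^\<^sub>m k)$$(i,i) = J$$(i,i)^k"
proof (induction k)
  case 0
  then show ?case using J by auto
next
  case (Suc k)
  have "(J ^\<^sub>m Suc k)$$(i,i) = (\<Sum>l<n. (J ^\<^sub>m k)$$(i,l) * J$$(l,i))"
    using mult_entry[of "J ^\<^sub>m k" n J i i] Suc.prems J by auto
  also have "\<dots> = (J ^\<^sub>m k)$$(i,i) * J$$(i,i)"
  proof (intro sum_single)
    fix l assume l: "l \<in> {..<n}" "l \<noteq> i"
    show "(J ^\<^sub>m k)$$(i,l) * J$$(l,i) = 0"
    proof (cases "l < i")
      case True
      then show ?thesis using bidiag_pow_lower[OF J] Suc l by auto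
    next
      case False
      then have "J$$(l,i) = 0" using J(2) Suc.prems l unfolding bidiag_def by auto
      then show ?thesis by simp
    qed
  qed (use Suc in auto)
  finally show ?case using Suc by simp
qed

lemma bidiag_pow_super:
  assumes J: "J \<in> carrier_mat n n" "bidiag J n" and i: "Suc i < n" and one: "J$$(i,Suc i) = 1"
  shows "(J ^\<^sub>m k)$$(i,Suc i) = of_nat k * J$$(i,i)^(k-1)"
proof (induction k)
  case 0
  then show ?case using J i by auto
next
  case (Suc k)
  have eq: "J$$(Suc i, Suc i) = J$$(i,i)" using J(2)[unfolded bidiag_def, rule_format, of i "Suc i"] i one by auto
  have "(J ^\<^sub>m Suc k)$$(i,Suc i) = (\<Sum>l<n. (J ^\<^sub>m k)$$(i,l) * J$$(l,Suc i))"
    using mult_entry[of "J ^\<^sub>m k" n J i "Suc i"] i J by auto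
  also have "\<dots> = (J ^\<^sub>m k)$$(i,i) * J$$(i,Suc i) + (J ^\<^sub>m k)$$(i,Suc i) * J$$(Suc i,Suc i)"
  proof (intro sum_two)
    fix l assume l: "l \<in> {..<n}" "l \<noteq> i" "l \<noteq> Suc i"
    show "(J ^\<^sub>m k)$$(i,l) * J$$(l,Suc i) = 0"
    proof (cases "l < i")
      case True
      then show ?thesis using bidiag_pow_lower[OF J] i l by auto
    next
      case False
      then have "J$$(l,Suc i) = 0" using J(2) i l unfolding bidiag_def by auto
      then show ?thesis by simp
    qed
  qed (use i in auto)
  also have "\<dots> = J$$(i,i)^k + of_nat k * J$$(i,i)^(k-1) * J$$(i,i)"
    using bidiag_pow_diag[OF J, of i k] i one eq Suc by simp
  also have "\<dots> = of_nat (Suc k) * J$$(i,i)^(Suc k - 1)"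
    by (cases k) (auto simp: algebra_simps)
  finally show ?case .
qed

lemma bidiag_bounded:
  assumes J: "J \<in> carrier_mat n n" "bidiag J n"
    and bnd: "\<And>k i j. i<n \<Longrightarrow> j<n \<Longrightarrow> cmod ((J ^\<^sub>m k)$$(i,j)) \<le> C"
  shows "i<n \<Longrightarrow> cmod (J$$(i,i)) \<le> 1"
    and "Suc i<n \<Longrightarrow> J$$(i,Suc i) = 1 \<Longrightarrow> cmod (J$$(i,i)) < 1"
proof -
  assume i: "i < n"
  show "cmod (J$$(i,i)) \<le> 1"
  proof (rule ccontr)
    assume "\<not> ?thesis"
    then have "1 < cmod (J$$(i,i))" by simp
    from real_arch_pow[OF this, of C] obtain k where "C < cmod (J$$(i,i)) ^ k" by auto
    moreover have "cmod (J$$(i,i)) ^ k \<le> C" using bnd[OF i i, of k] bidiag_pow_diag[OF J i, of k]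
      by (simp add: norm_power)
    ultimately show False by simp
  qed
next
  assume i: "Suc i < n" and one: "J$$(i,Suc i) = 1"
  show "cmod (J$$(i,i)) < 1"
  proof (rule ccontr)
    assume "\<not> ?thesis"
    then have x: "1 \<le> cmod (J$$(i,i))" by simp
    define k where "k = Suc (nat (ceiling C))"
    have "cmod ((J ^\<^sub>m k)$$(i,Suc i)) = real k * cmod (J$$(i,i)) ^ (k-1)"
      using bidiag_pow_super[OF J i one, of k] by (simp add: norm_mult norm_power)
    also have "\<dots> \<ge> real k" using x one_le_power[OF x, of "k-1"]
      by (metis mult_cancel_left1 mult_left_mono of_nat_0_le_iff)
    finally have "real k \<le> C" using bnd[of i "Suc i" k] i by linarith
    moreover have "C < real k" unfolding k_def by linarith
    ultimately show False by simp
  qed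
qed

lemma triple_bound:
  assumes Q: "Q \<in> carrier_mat n n" and B: "B \<in> carrier_mat n n" and P: "P \<in> carrier_mat n n"
    and bB: "\<And>i j. i<n \<Longrightarrow> j<n \<Longrightarrow> cmod (B$$(i,j)) \<le> 1"
    and i: "i<n" and j: "j<n"
  shows "cmod ((Q*B*P)$$(i,j)) \<le> (\<Sum>a<n. \<Sum>b<n. cmod (Q$$(a,b))) * (\<Sum>c<n. \<Sum>d<n. cmod (P$$(c,d)))"
proof -
  have "(Q*B*P)$$(i,j) = (\<Sum>l<n. (Q*B)$$(i,l) * P$$(l,j))"
    using mult_entry[of "Q*B" n P i j] Q B P i j by auto
  also have "\<dots> = (\<Sum>l<n. (\<Sum>r<n. Q$$(i,r) * B$$(r,l)) * P$$(l,j))"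
    using mult_entry[of Q n B i] Q B i by auto
  finally have eq: "(Q*B*P)$$(i,j) = (\<Sum>l<n. (\<Sum>r<n. Q$$(i,r) * B$$(r,l)) * P$$(l,j))" .
  have "cmod ((Q*B*P)$$(i,j)) \<le> (\<Sum>l<n. (\<Sum>r<n. cmod (Q$$(i,r)) * cmod (B$$(r,l))) * cmod (P$$(l,j)))"
    unfolding eq
    by (rule order_trans[OF norm_sum], rule sum_mono, simp add: norm_mult,
        rule mult_right_mono, rule order_trans[OF norm_sum], auto simp: norm_mult)
  also have "\<dots> \<le> (\<Sum>l<n. (\<Sum>r<n. cmod (Q$$(i,r))) * cmod (P$$(l,j)))"
    by (intro sum_mono mult_right_mono) (auto intro!: mult_left_le bB)
  also have "\<dots> = (\<Sum>r<n. cmod (Q$$(i,r))) * (\<Sum>l<n. cmod (P$$(l,j)))"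
    by (rule sum_distrib_left[symmetric])
  also have "\<dots> \<le> (\<Sum>a<n. \<Sum>b<n. cmod (Q$$(a,b))) * (\<Sum>c<n. \<Sum>d<n. cmod (P$$(c,d)))"
  proof (rule mult_mono)
    show "(\<Sum>r<n. cmod (Q$$(i,r))) \<le> (\<Sum>a<n. \<Sum>b<n. cmod (Q$$(a,b)))"
      using i by (intro member_le_sum[where f="\<lambda>a. \<Sum>b<n. cmod (Q$$(a,b))"]) (auto intro: sum_nonneg)
    show "(\<Sum>l<n. cmod (P$$(l,j))) \<le> (\<Sum>c<n. \<Sum>d<n. cmod (P$$(c,d)))"
      using j by (intro sum_mono member_le_sum[where f="\<lambda>d. cmod (P$$(_,d))"]) auto
  qed (auto intro!: sum_nonneg)
  finally show ?thesis .
qed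

lemma spectral_lemma:
  fixes A :: "complex mat"
  assumes A: "A \<in> carrier_mat n n"
    and bnd: "\<And>k i j. i<n \<Longrightarrow> j<n \<Longrightarrow> cmod ((A ^\<^sub>m k)$$(i,j)) \<le> 1"
  shows "\<exists>S T lam bet. S \<in> carrier_mat n n \<and> T \<in> carrier_mat n n \<and> T * S = 1\<^sub>m n \<and>
     (\<forall>i<n. \<forall>k<n. (S*A)$$(i,k) = lam i * S$$(i,k) + complex_of_real (bet i) * (if Suc i < n then S$$(Suc i,k) else 0)) \<and>
     (\<forall>i<n. 0 \<le> bet i \<and> cmod (lam i) + bet i \<le> 1) \<and>
     (\<forall>i. Suc i < n \<longrightarrow> cmod (lam (Suc i)) + bet i \<le> 1)"
proof -
  from char_poly_factorized[OF A] obtain as where cp: "char_poly A = (\<Prod> a \<leftarrow> as. [:- a, 1:])" by auto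
  from jordan_nf_exists[OF A cp] obtain n_as where jnf: "jordan_nf A n_as" by auto
  define J where "J = jordan_matrix n_as"
  from jnf obtain P Q where wit: "similar_mat_wit A J P Q"
    unfolding jordan_nf_def similar_mat_def J_def by auto
  note D = similar_mat_witD2[OF A wit]
  have Jc: "J \<in> carrier_mat n n" and Pc: "P \<in> carrier_mat n n" and Qc: "Q \<in> carrier_mat n n"
    using D by auto
  have nJ: "sum_list (map fst n_as) = n" using Jc unfolding J_def by auto
  have bd: "bidiag J n" using jordan_bidiag[of n_as] nJ unfolding J_def by simp
  have Jpow: "J ^\<^sub>m k = Q * A ^\<^sub>m k * P" for k
    using similar_mat_witD2(3)[OF pow_carrier_mat[OF Jc] similar_mat_wit_pow[OF similar_mat_wit_sym[OF wit], of k]] .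
  define C where "C = (\<Sum>a<n. \<Sum>b<n. cmod (Q$$(a,b))) * (\<Sum>c<n. \<Sum>d<n. cmod (P$$(c,d)))"
  have Jb: "cmod ((J ^\<^sub>m k)$$(i,j)) \<le> C" if "i<n" "j<n" for k i j
    unfolding Jpow C_def using that
    by (intro triple_bound[OF Qc pow_carrier_mat[OF A] Pc]) (auto intro: bnd)
  have d1: "cmod (J$$(i,i)) \<le> 1" if "i<n" for i using bidiag_bounded(1)[OF Jc bd Jb that] by blast
  have d2: "cmod (J$$(i,i)) < 1" if "Suc i<n" "J$$(i,Suc i) = 1" for i
    using bidiag_bounded(2)[OF Jc bd Jb that] by blast
  define E where "E = {1 - cmod (J$$(i,i)) | i. i<n \<and> cmod (J$$(i,i)) < 1}"
  have finE: "finite E" unfolding E_def by simp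
  define e where "e = Min (insert 1 E)"
  have e_pos: "0 < e" unfolding e_def using finE by (auto simp: E_def)
  have e_le: "e \<le> 1 - cmod (J$$(i,i))" if "i<n" "cmod (J$$(i,i)) < 1" for i
    unfolding e_def using finE that by (intro Min_le) (auto simp: E_def)
  have e1: "e \<le> 1" unfolding e_def using finE by auto
  define S where "S = Matrix.mat n n (\<lambda>(i,k). complex_of_real ((1/e)^i) * Q$$(i,k))"
  define T where "T = Matrix.mat n n (\<lambda>(k,i). P$$(k,i) * complex_of_real (e^i))"
  define lam where "lam i = J$$(i,i)" for i
  define bet where "bet i = (if Suc i < n \<and> J$$(i,Suc i) = 1 then e else 0)" for i
  have Sc: "S \<in> carrier_mat n n" and Tc: "T \<in> carrier_mat n n" unfolding S_def T_def by auto
  have TS: "T * S = 1\<^sub>m n"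
  proof (rule eq_matI)
    fix k j assume k: "k < dim_row (1\<^sub>m n)" and j: "j < dim_col (1\<^sub>m n)"
    have "(T*S)$$(k,j) = (\<Sum>l<n. T$$(k,l) * S$$(l,j))" using mult_entry[OF Tc Sc] k j by auto
    also have "\<dots> = (\<Sum>l<n. P$$(k,l) * Q$$(l,j))"
      using k j e_pos by (intro sum.cong) (auto simp: T_def S_def power_one_over field_simps)
    also have "\<dots> = (P*Q)$$(k,j)" using mult_entry[OF Pc Qc] k j by auto
    also have "\<dots> = 1\<^sub>m n $$ (k,j)" using D(1) by simp
    finally show "(T*S)$$(k,j) = 1\<^sub>m n $$ (k,j)" .
  qed (use Tc Sc in auto)
  have QA: "Q * A = J * Q"
  proof -
    have "Q * A = Q * (P * J * Q)" using D(3) by simp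
    also have "\<dots> = (Q * P) * J * Q" using Qc Pc Jc by (simp add: assoc_mult_mat[of _ n n _ n _ n])
    also have "\<dots> = J * Q" using D(2) Jc Qc by simp
    finally show ?thesis .
  qed
  have row: "(S*A)$$(i,k) = lam i * S$$(i,k) + complex_of_real (bet i) * (if Suc i < n then S$$(Suc i,k) else 0)"
    if i: "i<n" and k: "k<n" for i k
  proof -
    have "(S*A)$$(i,k) = (\<Sum>l<n. S$$(i,l) * A$$(l,k))" using mult_entry[OF Sc A] i k by auto
    also have "\<dots> = complex_of_real ((1/e)^i) * (\<Sum>l<n. Q$$(i,l) * A$$(l,k))"
      using i by (auto simp: S_def sum_distrib_left mult.assoc intro!: sum.cong)
    also have "(\<Sum>l<n. Q$$(i,l) * A$$(l,k)) = (Q*A)$$(i,k)" using mult_entry[OF Qc A] i k by auto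
    also have "\<dots> = (J*Q)$$(i,k)" using QA by simp
    also have "\<dots> = (\<Sum>l<n. J$$(i,l) * Q$$(l,k))" using mult_entry[OF Jc Qc] i k by auto
    also have "\<dots> = J$$(i,i) * Q$$(i,k) + (if Suc i < n then J$$(i,Suc i) * Q$$(Suc i,k) else 0)"
    proof (cases "Suc i < n")
      case True
      have "(\<Sum>l<n. J$$(i,l) * Q$$(l,k)) = J$$(i,i) * Q$$(i,k) + J$$(i,Suc i) * Q$$(Suc i,k)"
        using bd True i unfolding bidiag_def by (intro sum_two) auto
      then show ?thesis using True by simp
    next
      case False
      have "(\<Sum>l<n. J$$(i,l) * Q$$(l,k)) = J$$(i,i) * Q$$(i,k)"
        using bd False i unfolding bidiag_def by (intro sum_single) auto
      then show ?thesis using False by simp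
    qed
    finally have eq: "(S*A)$$(i,k) = complex_of_real ((1/e)^i) * (J$$(i,i) * Q$$(i,k) + (if Suc i < n then J$$(i,Suc i) * Q$$(Suc i,k) else 0))" .
    show ?thesis
    proof (cases "Suc i < n")
      case True
      have "J$$(i,Suc i) = 0 \<or> J$$(i,Suc i) = 1" using bd[unfolded bidiag_def, rule_format, of i "Suc i"] True i by auto
      then show ?thesis using True i k e_pos unfolding eq
        by (auto simp: S_def lam_def bet_def field_simps power_one_over)
    next
      case False
      then show ?thesis using i k unfolding eq by (auto simp: S_def lam_def bet_def)
    qed
  qed
  have c1: "0 \<le> bet i \<and> cmod (lam i) + bet i \<le> 1" if "i<n" for i
    using e_pos d1[OF that] d2[of i] e_le[OF that] unfolding bet_def lam_def by auto
  have c2: "cmod (lam (Suc i)) + bet i \<le> 1" if "Suc i < n" for i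
  proof (cases "J$$(i,Suc i) = 1")
    case True
    then have "J$$(Suc i,Suc i) = J$$(i,i)" using bd[unfolded bidiag_def, rule_format, of i "Suc i"] that by auto
    then show ?thesis using True that d2[OF that True] e_le[of i] unfolding bet_def lam_def by auto
  next
    case False
    then show ?thesis using d1[OF that] unfolding bet_def lam_def by auto
  qed
  show ?thesis using Sc Tc TS row c1 c2 by blast
qed

lemma stoch_pow:
  fixes R :: "real mat"
  assumes R: "R \<in> carrier_mat n n" and nn: "\<And>i j. i<n \<Longrightarrow> j<n \<Longrightarrow> 0 \<le> R$$(i,j)"
    and rs: "\<And>i. i<n \<Longrightarrow> (\<Sum>j<n. R$$(i,j)) = 1"
  shows "(\<forall>i<n. \<forall>j<n. 0 \<le> (R ^\<^sub>m k)$$(i,j)) \<and> (\<forall>i<n. (\<Sum>j<n. (R ^\<^sub>m k)$$(i,j)) = 1)"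
proof (induction k)
  case 0
  have "(\<Sum>j<n. (1\<^sub>m n :: real mat) $$ (i, j)) = 1" if "i<n" for i
    using that by (subst sum_single[of _ i]) auto
  then show ?case using R by auto
next
  case (Suc k)
  have e: "(R ^\<^sub>m Suc k)$$(i,j) = (\<Sum>l<n. (R ^\<^sub>m k)$$(i,l) * R$$(l,j))" if "i<n" "j<n" for i j
    using mult_entry[of "R ^\<^sub>m k" n R i j] that R by auto
  have 1: "\<forall>i<n. \<forall>j<n. 0 \<le> (R ^\<^sub>m Suc k)$$(i,j)"
  proof (intro allI impI)
    fix i j assume "i<n" "j<n"
    then show "0 \<le> (R ^\<^sub>m Suc k)$$(i,j)" unfolding e[OF \<open>i<n\<close> \<open>j<n\<close>]
      using Suc nn by (auto intro!: sum_nonneg)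
  qed
  have 2: "(\<Sum>j<n. (R ^\<^sub>m Suc k)$$(i,j)) = 1" if i: "i<n" for i
  proof -
    have "(\<Sum>j<n. (R ^\<^sub>m Suc k)$$(i,j)) = (\<Sum>j<n. \<Sum>l<n. (R ^\<^sub>m k)$$(i,l) * R$$(l,j))"
      using i by (intro sum.cong refl e) auto
    also have "\<dots> = (\<Sum>l<n. (R ^\<^sub>m k)$$(i,l) * (\<Sum>j<n. R$$(l,j)))"
      by (subst sum.swap) (simp add: sum_distrib_left)
    also have "\<dots> = (\<Sum>l<n. (R ^\<^sub>m k)$$(i,l))" by (simp add: rs)
    also have "\<dots> = 1" using Suc i by auto
    finally show ?thesis .
  qed
  show ?case using 1 2 by blast
qed

lemma stoch_pow_bound:
  fixes R :: "real mat"
  assumes R: "R \<in> carrier_mat n n" and nn: "\<And>i j. i<n \<Longrightarrow> j<n \<Longrightarrow> 0 \<le> R$$(i,j)"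
    and rs: "\<And>i. i<n \<Longrightarrow> (\<Sum>j<n. R$$(i,j)) = 1"
    and i: "i<n" and j: "j<n"
  shows "cmod ((map_mat complex_of_real R ^\<^sub>m k)$$(i,j)) \<le> 1"
proof -
  note sp = stoch_pow[OF R nn rs, of k]
  have "(R ^\<^sub>m k)$$(i,j) \<le> (\<Sum>j<n. (R ^\<^sub>m k)$$(i,j))"
    using sp i j by (intro member_le_sum) auto
  then have le: "(R ^\<^sub>m k)$$(i,j) \<le> 1" using sp i by auto
  have "map_mat complex_of_real R ^\<^sub>m k = map_mat complex_of_real (R ^\<^sub>m k)"
    using of_real_hom.mat_hom_pow[OF R] by metis
  then have "(map_mat complex_of_real R ^\<^sub>m k)$$(i,j) = complex_of_real ((R ^\<^sub>m k)$$(i,j))"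
    using i j R by auto
  then show ?thesis using le sp i j by auto
qed

hide_const (open) Matrix.mat
no_notation Matrix.vec_index (infixl \<open>$\<close> 100)

lemma Qbar_D:
  assumes "Q \<in> Qbar"
  shows "transpose Q = Q" "0 \<le> v \<bullet> (Q *v v)" "norm (Q *v v) \<le> norm v"
proof -
  show "transpose Q = Q" "0 \<le> v \<bullet> (Q *v v)" using assms unfolding Qbar_def by auto
  have "norm (Q *v v) \<le> onorm (\<lambda>v. Q *v v) * norm v"
    by (rule onorm) simp
  also have "\<dots> \<le> 1 * norm v" using assms unfolding Qbar_def by (intro mult_right_mono) auto
  finally show "norm (Q *v v) \<le> norm v" by simp
qed

lemma Q_sym: "Q \<in> Qbar \<Longrightarrow> a \<bullet> (Q *v b) = b \<bullet> (Q *v a)"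
  by (metis Qbar_D(1) dot_lmul_matrix inner_commute vector_transpose_matrix)

definition cQ :: "real^'n^'n \<Rightarrow> complex^'n^'n" where
  "cQ Q = (\<chi> i j. complex_of_real (Q$i$j))"
definition vre :: "complex^'n \<Rightarrow> real^'n" where "vre a = (\<chi> i. Re (a$i))"
definition vim :: "complex^'n \<Rightarrow> real^'n" where "vim a = (\<chi> i. Im (a$i))"

lemma inner_split: "inner a b = vre a \<bullet> vre b + vim a \<bullet> vim b"
  by (simp add: inner_vec_def inner_complex_def vre_def vim_def sum.distrib)

lemma norm_split: "(norm a)^2 = (norm (vre a))^2 + (norm (vim a))^2"
  by (simp add: power2_norm_eq_inner inner_split)

lemma re_cQ: "vre (cQ Q *v a) = Q *v vre a" and im_cQ: "vim (cQ Q *v a) = Q *v vim a"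
  by (simp_all add: Finite_Cartesian_Product.vec_eq_iff vre_def vim_def cQ_def matrix_vector_mult_def Re_sum Im_sum)

lemma cQ_sym: "Q \<in> Qbar \<Longrightarrow> inner a (cQ Q *v b) = inner b (cQ Q *v a)"
  by (simp add: inner_split re_cQ im_cQ Q_sym)

lemma cQ_psd: "Q \<in> Qbar \<Longrightarrow> 0 \<le> inner a (cQ Q *v a)"
  by (simp add: inner_split re_cQ im_cQ Qbar_D(2) add_nonneg_nonneg)

lemma Q_L1: assumes Q: "Q \<in> Qbar" shows "(norm (Q *v w))^2 \<le> w \<bullet> (Q *v w)"
proof -
  define a where "a = Q *v w"
  have aa: "(norm a)^2 = w \<bullet> (Q *v a)"
    unfolding a_def power2_norm_eq_inner using Q_sym[OF Q, of "Q *v w" w] by simp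
  have psd: "0 \<le> (w - a) \<bullet> (Q *v (w - a))" using Qbar_D(2)[OF Q] .
  have "(w - a) \<bullet> (Q *v (w - a)) = w \<bullet> (Q *v w) - 2 * (w \<bullet> (Q *v a)) + a \<bullet> (Q *v a)"
    using Q_sym[OF Q, of a w] by (simp add: matrix_vector_mult_diff_distrib inner_diff_left inner_diff_right)
  moreover have "a \<bullet> (Q *v a) \<le> (norm a)^2"
  proof -
    have "a \<bullet> (Q *v a) \<le> norm a * norm (Q *v a)" by (rule Cauchy_Schwarz_ineq2[THEN order_trans[OF abs_ge_self]])
    also have "\<dots> \<le> norm a * norm a" using Qbar_D(3)[OF Q] by (intro mult_left_mono) auto
    finally show ?thesis by (simp add: power2_eq_square)
  qed
  ultimately show ?thesis using psd aa unfolding a_def by linarith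
qed

lemma cQ_L1: assumes Q: "Q \<in> Qbar" shows "(norm (cQ Q *v w))^2 \<le> inner w (cQ Q *v w)"
  using Q_L1[OF Q, of "vre w"] Q_L1[OF Q, of "vim w"]
  by (simp add: norm_split inner_split re_cQ im_cQ)

lemma cQ_norm: assumes Q: "Q \<in> Qbar" shows "norm (cQ Q *v w) \<le> norm w"
proof -
  have "(norm (cQ Q *v w))^2 \<le> (norm w)^2"
    using Qbar_D(3)[OF Q, of "vre w"] Qbar_D(3)[OF Q, of "vim w"]
    by (simp add: norm_split re_cQ im_cQ add_mono power_mono)
  then show ?thesis by (simp add: power2_le_iff_abs_le)
qed

lemma cQ_add: "cQ Q *v (a + b) = cQ Q *v a + cQ Q *v b"
  and cQ_diff: "cQ Q *v (a - b) = cQ Q *v a - cQ Q *v b"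
  by (simp_all add: matrix_vector_right_distrib matrix_vector_mult_diff_distrib)

lemma cQ_smult: "cQ Q *v (c *s a) = c *s (cQ Q *v a)"
  unfolding Finite_Cartesian_Product.vec_eq_iff by (simp add: cQ_def matrix_vector_mult_def sum_distrib_left mult.left_commute)

lemma inner_smult: "inner (c *s a) (c *s b) = (cmod c)^2 * inner a b"
proof -
  have "inner (c * x) (c * y) = (cmod c)^2 * inner x y" for x y :: complex
    unfolding inner_complex_def cmod_power2 by (simp add: algebra_simps power2_eq_square)
  then show ?thesis by (simp add: inner_vec_def sum_distrib_left)
qed

lemma cQ_cross:
  assumes Q: "Q \<in> Qbar" and s: "0 < s"
  shows "2 * inner a (cQ Q *v b) \<le> s * inner a (cQ Q *v a) + inner b (cQ Q *v b) / s"
proof -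
  let ?F = "\<lambda>v. cQ Q *v v"
  have "0 \<le> inner (of_real s *s a - b) (?F (of_real s *s a - b))" by (rule cQ_psd[OF Q])
  also have "\<dots> = inner (of_real s *s a) (?F (of_real s *s a)) - 2 * inner (of_real s *s a) (?F b) + inner b (?F b)"
    using cQ_sym[OF Q, of b "of_real s *s a"]
    by (simp add: cQ_diff inner_diff_left inner_diff_right)
  also have "inner (of_real s *s a) (?F (of_real s *s a)) = s^2 * inner a (?F a)"
    by (simp add: cQ_smult inner_smult)
  also have "inner (of_real s *s a) (?F b) = s * inner a (?F b)"
    by (simp add: inner_vec_def inner_complex_def sum_distrib_left algebra_simps)
  finally have "2 * s * inner a (?F b) \<le> s * (s * inner a (?F a)) + inner b (?F b)"
    by (simp add: power2_eq_square algebra_simps)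
  then have "s * (2 * inner a (?F b)) \<le> s * (s * inner a (?F a) + inner b (?F b) / s)"
    using s by (simp add: algebra_simps)
  then show ?thesis using s by simp
qed

lemma cQ_row:
  assumes Q: "Q \<in> Qbar"
  shows "(norm (u + cQ Q *v (v - u)))^2 \<le> (norm u)^2 - inner u (cQ Q *v u) + inner v (cQ Q *v v)"
proof -
  let ?F = "\<lambda>v. cQ Q *v v"
  define w where "w = v - u"
  have v: "v = u + w" unfolding w_def by simp
  have "(norm (u + ?F w))^2 = (norm u)^2 + 2 * inner u (?F w) + (norm (?F w))^2"
    by (simp add: power2_norm_eq_inner inner_add_left inner_add_right inner_commute)
  moreover have "inner v (?F v) = inner u (?F u) + 2 * inner u (?F w) + inner w (?F w)"
    unfolding v using cQ_sym[OF Q, of w u] by (simp add: cQ_add inner_add_left inner_add_right)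
  ultimately show ?thesis using cQ_L1[OF Q, of w] unfolding w_def by linarith
qed

lemma cQ_comb:
  assumes Q: "Q \<in> Qbar" and b: "0 \<le> \<beta>" and lb: "cmod l + \<beta> \<le> 1"
  shows "inner (l *s a + complex_of_real \<beta> *s c) (cQ Q *v (l *s a + complex_of_real \<beta> *s c))
     \<le> cmod l * inner a (cQ Q *v a) + \<beta> * inner c (cQ Q *v c)"
proof -
  let ?F = "\<lambda>v. cQ Q *v v"
  define x where "x = l *s a"
  define y where "y = complex_of_real \<beta> *s c"
  define qa where "qa = inner a (?F a)"
  define qc where "qc = inner c (?F c)"
  have qa0: "0 \<le> qa" "0 \<le> qc" unfolding qa_def qc_def using cQ_psd[OF Q] by auto
  have qx: "inner x (?F x) = (cmod l)^2 * qa" unfolding x_def qa_def by (simp add: cQ_smult inner_smult)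
  have qy: "inner y (?F y) = \<beta>^2 * qc" unfolding y_def qc_def using b by (simp add: cQ_smult inner_smult)
  have exp: "inner (x + y) (?F (x + y)) = inner x (?F x) + 2 * inner x (?F y) + inner y (?F y)"
    using cQ_sym[OF Q, of y x] by (simp add: cQ_add inner_add_left inner_add_right)
  have l1: "cmod l \<le> 1" "\<beta> \<le> 1" using lb b norm_ge_zero[of l] by linarith+
  have "inner (x + y) (?F (x + y)) \<le> cmod l * qa + \<beta> * qc"
  proof (cases "cmod l = 0 \<or> \<beta> = 0")
    case True
    then show ?thesis
    proof
      assume l0: "cmod l = 0"
      then have "x = 0" unfolding x_def by (simp add: Finite_Cartesian_Product.vec_eq_iff)
      then have "inner (x + y) (?F (x + y)) = \<beta>^2 * qc" using qy by simp
      also have "\<dots> \<le> \<beta> * qc" using b l1 qa0 by (simp add: power2_eq_square mult_right_le_one_le mult_left_le_one_le mult_right_mono)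
      finally show ?thesis using l0 by simp
    next
      assume b0: "\<beta> = 0"
      then have "y = 0" unfolding y_def by (simp add: Finite_Cartesian_Product.vec_eq_iff)
      then have "inner (x + y) (?F (x + y)) = (cmod l)^2 * qa" using qx by simp
      also have "\<dots> \<le> cmod l * qa" using l1 qa0
        by (simp add: power2_eq_square mult_right_mono mult_left_le_one_le mult.assoc mult_nonneg_nonneg)
      finally show ?thesis using b0 by simp
    qed
  next
    case False
    then have lp: "0 < cmod l" and bp: "0 < \<beta>" using b by auto
    define s where "s = \<beta> / cmod l"
    have sp: "0 < s" unfolding s_def using lp bp by simp
    have "2 * inner x (?F y) \<le> s * inner x (?F x) + inner y (?F y) / s" by (rule cQ_cross[OF Q sp])
    then have "inner (x + y) (?F (x + y)) \<le> (1 + s) * ((cmod l)^2 * qa) + (1 + 1/s) * (\<beta>^2 * qc)"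
      using exp qx qy by (simp add: algebra_simps)
    also have "\<dots> = (cmod l + \<beta>) * (cmod l * qa) + (cmod l + \<beta>) * (\<beta> * qc)"
      unfolding s_def using lp bp by (simp add: field_simps power2_eq_square)
    also have "\<dots> \<le> 1 * (cmod l * qa) + 1 * (\<beta> * qc)"
      using lb qa0 lp bp by (intro add_mono mult_right_mono) auto
    finally show ?thesis by simp
  qed
  then show ?thesis unfolding x_def y_def qa_def qc_def .
qed

section \<open>The update map\<close>

lemma upd_comp:
  fixes \<Lambda> :: "real^'p::finite^'p" and Q :: "real^'n::finite^'n" and x :: "real^('p \<times> 'n)"
  shows "((mat 1 + kron (\<Lambda> - mat 1) Q) *v x) $ (l,c) =
     x$(l,c) + (\<Sum>d\<in>UNIV. Q$c$d * ((\<Sum>l2\<in>UNIV. \<Lambda>$l$l2 * x$(l2,d)) - x$(l,d)))"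
proof -
  have "((mat 1 + kron (\<Lambda> - mat 1) Q) *v x) = x + kron (\<Lambda> - mat 1) Q *v x"
    by (simp add: matrix_vector_mult_add_rdistrib)
  then have "((mat 1 + kron (\<Lambda> - mat 1) Q) *v x) $ (l,c) = x$(l,c) + (\<Sum>r\<in>UNIV. kron (\<Lambda> - mat 1) Q $ (l,c) $ r * x $ r)"
    by (simp add: matrix_vector_mult_def)
  also have "(\<Sum>r\<in>UNIV. kron (\<Lambda> - mat 1) Q $ (l,c) $ r * x $ r)
      = (\<Sum>r\<in>UNIV \<times> UNIV. (\<Lambda>$l$(fst r) - (if l = fst r then 1 else 0)) * Q$c$(snd r) * x $ r)"
    by (simp add: kron_def Finite_Cartesian_Product.mat_def UNIV_Times_UNIV)
  also have "\<dots> = (\<Sum>l2\<in>UNIV. \<Sum>d\<in>UNIV. (\<Lambda>$l$l2 - (if l = l2 then 1 else 0)) * Q$c$d * x $ (l2,d))"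
    by (simp add: sum.cartesian_product split_def)
  also have "\<dots> = (\<Sum>d\<in>UNIV. \<Sum>l2\<in>UNIV. (\<Lambda>$l$l2 - (if l = l2 then 1 else 0)) * Q$c$d * x $ (l2,d))"
    by (rule sum.swap)
  also have "\<dots> = (\<Sum>d\<in>UNIV. Q$c$d * ((\<Sum>l2\<in>UNIV. \<Lambda>$l$l2 * x$(l2,d)) - x$(l,d)))"
  proof (rule sum.cong[OF refl])
    fix d
    have "(\<Sum>l2\<in>UNIV. (\<Lambda>$l$l2 - (if l = l2 then 1 else 0)) * Q$c$d * x $ (l2,d))
        = Q$c$d * ((\<Sum>l2\<in>UNIV. \<Lambda>$l$l2 * x$(l2,d)) - (\<Sum>l2\<in>UNIV. (if l = l2 then x$(l2,d) else 0)))"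
    proof -
      have "\<And>l2. (\<Lambda>$l$l2 - (if l = l2 then 1 else 0)) * Q$c$d * x $ (l2,d) = Q$c$d * (\<Lambda>$l$l2 * x$(l2,d)) - Q$c$d * (if l = l2 then x$(l2,d) else 0)"
        by (auto simp: algebra_simps)
      then show ?thesis by (simp only: sum_subtractf sum_distrib_left[symmetric] right_diff_distrib)
    qed
    also have "(\<Sum>l2\<in>UNIV. (if l = l2 then x$(l2,d) else 0)) = x$(l,d)"
      by (simp add: sum.delta)
    finally show "(\<Sum>l2\<in>UNIV. (\<Lambda>$l$l2 - (if l = l2 then 1 else 0)) * Q$c$d * x $ (l2,d))
        = Q$c$d * ((\<Sum>l2\<in>UNIV. \<Lambda>$l$l2 * x$(l2,d)) - x$(l,d))" .
  qed
  finally show ?thesis .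
qed

definition Lin :: "('p::finite \<Rightarrow> complex) \<Rightarrow> real^('p \<times> 'n::finite) \<Rightarrow> complex^'n" where
  "Lin s x = (\<chi> c. \<Sum>l\<in>UNIV. s l * complex_of_real (x$(l,c)))"

lemma Lin_upd:
  fixes \<Lambda> :: "real^'p::finite^'p" and Q :: "real^'n::finite^'n" and x :: "real^('p \<times> 'n)"
  shows "Lin s ((mat 1 + kron (\<Lambda> - mat 1) Q) *v x) =
    Lin s x + cQ Q *v (Lin (\<lambda>l. \<Sum>l'\<in>UNIV. s l' * complex_of_real (\<Lambda>$l'$l)) x - Lin s x)"
  unfolding Finite_Cartesian_Product.vec_eq_iff
proof
  fix c
  let ?x' = "(mat 1 + kron (\<Lambda> - mat 1) Q) *v x"
  define w where "w l d = (\<Sum>l2\<in>UNIV. \<Lambda>$l$l2 * x$(l2,d)) - x$(l,d)" for l d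
  have 1: "Lin s ?x' $ c = (\<Sum>l\<in>UNIV. s l * complex_of_real (x$(l,c))) + (\<Sum>l\<in>UNIV. s l * complex_of_real (\<Sum>d\<in>UNIV. Q$c$d * w l d))"
    unfolding Lin_def upd_comp w_def by (simp add: distrib_left sum.distrib)
  have 2: "(Lin (\<lambda>l. \<Sum>l'\<in>UNIV. s l' * complex_of_real (\<Lambda>$l'$l)) x - Lin s x) $ d = (\<Sum>l\<in>UNIV. s l * complex_of_real (w l d))" for d
  proof -
    have "(\<Sum>l2\<in>UNIV. (\<Sum>l'\<in>UNIV. s l' * complex_of_real (\<Lambda>$l'$l2)) * complex_of_real (x$(l2,d)))
        = (\<Sum>l2\<in>UNIV. \<Sum>l\<in>UNIV. s l * (complex_of_real (\<Lambda>$l$l2) * complex_of_real (x$(l2,d))))"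
      by (simp only: sum_distrib_right mult.assoc)
    also have "\<dots> = (\<Sum>l\<in>UNIV. \<Sum>l2\<in>UNIV. s l * (complex_of_real (\<Lambda>$l$l2) * complex_of_real (x$(l2,d))))"
      by (rule sum.swap)
    also have "\<dots> = (\<Sum>l\<in>UNIV. s l * complex_of_real (\<Sum>l2\<in>UNIV. \<Lambda>$l$l2 * x$(l2,d)))"
      by (simp only: sum_distrib_left[symmetric] of_real_sum of_real_mult)
    finally have e: "(\<Sum>l2\<in>UNIV. (\<Sum>l'\<in>UNIV. s l' * complex_of_real (\<Lambda>$l'$l2)) * complex_of_real (x$(l2,d)))
        = (\<Sum>l\<in>UNIV. s l * complex_of_real (\<Sum>l2\<in>UNIV. \<Lambda>$l$l2 * x$(l2,d)))" .
    show ?thesis unfolding Lin_def w_def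
      by (simp only: vec_lambda_beta vector_minus_component e sum_subtractf[symmetric] right_diff_distrib[symmetric] of_real_diff)
  qed
  have 3: "(cQ Q *v (Lin (\<lambda>l. \<Sum>l'\<in>UNIV. s l' * complex_of_real (\<Lambda>$l'$l)) x - Lin s x)) $ c
      = (\<Sum>l\<in>UNIV. s l * complex_of_real (\<Sum>d\<in>UNIV. Q$c$d * w l d))"
  proof -
    have "(cQ Q *v (Lin (\<lambda>l. \<Sum>l'\<in>UNIV. s l' * complex_of_real (\<Lambda>$l'$l)) x - Lin s x)) $ c
        = (\<Sum>d\<in>UNIV. complex_of_real (Q$c$d) * (\<Sum>l\<in>UNIV. s l * complex_of_real (w l d)))"
      by (simp only: matrix_vector_mult_def vec_lambda_beta cQ_def 2)
    also have "\<dots> = (\<Sum>d\<in>UNIV. \<Sum>l\<in>UNIV. s l * (complex_of_real (Q$c$d) * complex_of_real (w l d)))"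
      by (simp only: sum_distrib_left mult.left_commute)
    also have "\<dots> = (\<Sum>l\<in>UNIV. \<Sum>d\<in>UNIV. s l * (complex_of_real (Q$c$d) * complex_of_real (w l d)))"
      by (rule sum.swap)
    also have "\<dots> = (\<Sum>l\<in>UNIV. s l * complex_of_real (\<Sum>d\<in>UNIV. Q$c$d * w l d))"
      by (simp only: sum_distrib_left[symmetric] of_real_sum of_real_mult)
    finally show ?thesis .
  qed
  show "Lin s ?x' $ c = (Lin s x + cQ Q *v (Lin (\<lambda>l. \<Sum>l'\<in>UNIV. s l' * complex_of_real (\<Lambda>$l'$l)) x - Lin s x)) $ c"
    unfolding 1 vector_add_component 3 by (simp add: Lin_def)
qed

lemma Lin_lin: "Lin (\<lambda>l. a * s l + b * t l) x = a *s Lin s x + b *s Lin t x"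
  unfolding Finite_Cartesian_Product.vec_eq_iff Lin_def
  by (simp add: sum.distrib sum_distrib_left algebra_simps)

lemma Lin_zero: "Lin (\<lambda>l. 0) x = 0"
  unfolding Finite_Cartesian_Product.vec_eq_iff Lin_def by simp

lemma V_decr:
  fixes \<Lambda> :: "real^'p::finite^'p" and Q :: "real^'n::finite^'n" and x :: "real^('p \<times> 'n)"
    and sc :: "nat \<Rightarrow> 'p \<Rightarrow> complex"
  assumes Q: "Q \<in> Qbar"
    and rowrel: "\<And>i. i<m \<Longrightarrow> (\<lambda>l. \<Sum>l'\<in>UNIV. sc i l' * complex_of_real (\<Lambda>$l'$l)) =
         (\<lambda>l. lam i * sc i l + complex_of_real (bet i) * (if Suc i<m then sc (Suc i) l else 0))"
    and c1: "\<And>i. i<m \<Longrightarrow> 0 \<le> bet i \<and> cmod (lam i) + bet i \<le> 1"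
    and c2: "\<And>i. Suc i < m \<Longrightarrow> cmod (lam (Suc i)) + bet i \<le> 1"
  shows "(\<Sum>i<m. (norm (Lin (sc i) ((mat 1 + kron (\<Lambda> - mat 1) Q) *v x)))^2) \<le> (\<Sum>i<m. (norm (Lin (sc i) x))^2)"
proof -
  let ?F = "\<lambda>v. cQ Q *v v"
  define Y where "Y i = Lin (sc i) x" for i
  define q where "q v = inner v (?F v)" for v
  define Yn where "Yn i = (if Suc i < m then Y (Suc i) else 0)" for i
  have q0: "0 \<le> q v" for v unfolding q_def by (rule cQ_psd[OF Q])
  have Z: "Lin (\<lambda>l. \<Sum>l'\<in>UNIV. sc i l' * complex_of_real (\<Lambda>$l'$l)) x = lam i *s Y i + complex_of_real (bet i) *s Yn i"
    if i: "i<m" for i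
  proof (cases "Suc i < m")
    case True
    then show ?thesis unfolding rowrel[OF i] Y_def Yn_def using Lin_lin[of "lam i" "sc i" "complex_of_real (bet i)" "sc (Suc i)" x]
      by simp
  next
    case False
    then show ?thesis unfolding rowrel[OF i] Y_def Yn_def using Lin_lin[of "lam i" "sc i" "complex_of_real (bet i)" "\<lambda>l. 0" x]
      by (simp add: Lin_zero)
  qed
  have step: "(norm (Lin (sc i) ((mat 1 + kron (\<Lambda> - mat 1) Q) *v x)))^2
      \<le> (norm (Y i))^2 - (1 - cmod (lam i)) * q (Y i) + bet i * q (Yn i)" if i: "i<m" for i
  proof -
    have "Lin (sc i) ((mat 1 + kron (\<Lambda> - mat 1) Q) *v x) = Y i + ?F ((lam i *s Y i + complex_of_real (bet i) *s Yn i) - Y i)"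
      unfolding Lin_upd Z[OF i] Y_def ..
    then have "(norm (Lin (sc i) ((mat 1 + kron (\<Lambda> - mat 1) Q) *v x)))^2
       \<le> (norm (Y i))^2 - q (Y i) + q (lam i *s Y i + complex_of_real (bet i) *s Yn i)"
      using cQ_row[OF Q, of "Y i" "lam i *s Y i + complex_of_real (bet i) *s Yn i"] unfolding q_def by simp
    also have "q (lam i *s Y i + complex_of_real (bet i) *s Yn i) \<le> cmod (lam i) * q (Y i) + bet i * q (Yn i)"
      unfolding q_def using c1[OF i] by (intro cQ_comb[OF Q]) auto
    finally show ?thesis by (simp add: algebra_simps)
  qed
  have "(\<Sum>i<m. (norm (Lin (sc i) ((mat 1 + kron (\<Lambda> - mat 1) Q) *v x)))^2)
     \<le> (\<Sum>i<m. (norm (Y i))^2 - (1 - cmod (lam i)) * q (Y i) + bet i * q (Yn i))"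
    by (intro sum_mono step) auto
  also have "\<dots> = (\<Sum>i<m. (norm (Y i))^2) - (\<Sum>i<m. (1 - cmod (lam i)) * q (Y i)) + (\<Sum>i<m. bet i * q (Yn i))"
    by (simp add: sum.distrib sum_subtractf)
  also have "(\<Sum>i<m. bet i * q (Yn i)) \<le> (\<Sum>i<m. (1 - cmod (lam i)) * q (Y i))"
  proof (cases m)
    case 0
    then show ?thesis by simp
  next
    case (Suc m')
    have "(\<Sum>i<m. bet i * q (Yn i)) = (\<Sum>i<m'. bet i * q (Y (Suc i)))"
      unfolding Suc Yn_def by (simp add: q_def)
    also have "\<dots> \<le> (\<Sum>i<m'. (1 - cmod (lam (Suc i))) * q (Y (Suc i)))"
    proof (intro sum_mono mult_right_mono)
      fix i assume "i \<in> {..<m'}"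
      then have "cmod (lam (Suc i)) + bet i \<le> 1" using c2[of i] Suc by auto
      then show "bet i \<le> 1 - cmod (lam (Suc i))" by linarith
    qed (rule q0)
    also have "\<dots> \<le> (1 - cmod (lam 0)) * q (Y 0) + (\<Sum>i<m'. (1 - cmod (lam (Suc i))) * q (Y (Suc i)))"
      using c1[of 0] q0 Suc by (simp add: norm_ge_zero)
    also have "\<dots> = (\<Sum>i<m. (1 - cmod (lam i)) * q (Y i))"
      unfolding Suc by (rule sum.lessThan_Suc_shift[symmetric])
    finally show ?thesis .
  qed
  finally show ?thesis unfolding Y_def by simp
qed

lemma cCS: "(cmod (\<Sum>i\<in>I. a i * b i))^2 \<le> (\<Sum>i\<in>I. (cmod (a i))^2) * (\<Sum>i\<in>I. (cmod (b i))^2)"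
proof -
  have "cmod (\<Sum>i\<in>I. a i * b i) \<le> (\<Sum>i\<in>I. cmod (a i) * cmod (b i))"
    by (rule order_trans[OF norm_sum]) (simp add: norm_mult)
  then have "(cmod (\<Sum>i\<in>I. a i * b i))^2 \<le> (\<Sum>i\<in>I. cmod (a i) * cmod (b i))^2"
    by (intro power_mono) auto
  also have "\<dots> \<le> (\<Sum>i\<in>I. (cmod (a i))^2) * (\<Sum>i\<in>I. (cmod (b i))^2)"
    by (rule Cauchy_Schwarz_ineq_sum)
  finally show ?thesis .
qed

lemma normsq_pair: "(norm (x::real^('p::finite \<times> 'n::finite)))^2 = (\<Sum>l\<in>UNIV. \<Sum>c\<in>UNIV. (x$(l,c))^2)"
proof -
  have "(norm x)^2 = (\<Sum>r\<in>UNIV. (x$r)^2)"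
    unfolding power2_norm_eq_inner inner_vec_def by (simp add: power2_eq_square)
  also have "\<dots> = (\<Sum>r\<in>UNIV \<times> UNIV. (x$r)^2)" by simp
  also have "\<dots> = (\<Sum>l\<in>UNIV. \<Sum>c\<in>UNIV. (x$(l,c))^2)"
    by (simp add: sum.cartesian_product split_def)
  finally show ?thesis .
qed

lemma normsq_cvec: "(norm (v::complex^'n::finite))^2 = (\<Sum>c\<in>UNIV. (cmod (v$c))^2)"
  by (simp add: power2_norm_eq_inner inner_vec_def)

lemma Lin_upper: "(norm (Lin s x))^2 \<le> (\<Sum>l\<in>UNIV. (cmod (s l))^2) * (norm x)^2"
proof -
  have "(norm (Lin s x))^2 = (\<Sum>c\<in>UNIV. (cmod (\<Sum>l\<in>UNIV. s l * complex_of_real (x$(l,c))))^2)"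
    by (simp add: normsq_cvec Lin_def)
  also have "\<dots> \<le> (\<Sum>c\<in>UNIV. (\<Sum>l\<in>UNIV. (cmod (s l))^2) * (\<Sum>l\<in>UNIV. (cmod (complex_of_real (x$(l,c))))^2))"
    by (intro sum_mono cCS)
  also have "\<dots> = (\<Sum>l\<in>UNIV. (cmod (s l))^2) * (\<Sum>c\<in>UNIV. \<Sum>l\<in>UNIV. (x$(l,c))^2)"
    by (simp add: sum_distrib_left)
  also have "(\<Sum>c\<in>UNIV. \<Sum>l\<in>UNIV. (x$(l,c))^2) = (norm x)^2"
    unfolding normsq_pair by (rule sum.swap)
  finally show ?thesis .
qed

lemma Lin_lower:
  fixes x :: "real^('p::finite \<times> 'n::finite)"
  assumes inv: "\<And>l c. complex_of_real (x$(l,c)) = (\<Sum>i<m. t l i * (Lin (sc i) x)$c)"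
  shows "(norm x)^2 \<le> (\<Sum>l\<in>UNIV. \<Sum>i<m. (cmod (t l i))^2) * (\<Sum>i<m. (norm (Lin (sc i) x))^2)"
proof -
  have "(norm x)^2 = (\<Sum>l\<in>UNIV. \<Sum>c\<in>UNIV. (cmod (\<Sum>i<m. t l i * (Lin (sc i) x)$c))^2)"
    unfolding normsq_pair inv[symmetric] by simp
  also have "\<dots> \<le> (\<Sum>l\<in>UNIV. \<Sum>c\<in>UNIV. (\<Sum>i<m. (cmod (t l i))^2) * (\<Sum>i<m. (cmod ((Lin (sc i) x)$c))^2))"
    by (intro sum_mono cCS)
  also have "\<dots> = (\<Sum>l\<in>UNIV. (\<Sum>i<m. (cmod (t l i))^2) * (\<Sum>c\<in>UNIV. \<Sum>i<m. (cmod ((Lin (sc i) x)$c))^2))"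
    by (simp add: sum_distrib_left)
  also have "(\<Sum>c\<in>UNIV. \<Sum>i<m. (cmod ((Lin (sc i) x)$c))^2) = (\<Sum>i<m. (norm (Lin (sc i) x))^2)"
    unfolding normsq_cvec by (rule sum.swap)
  finally show ?thesis by (simp add: sum_distrib_right)
qed

theorem theorem10:
  fixes \<Lambda> :: "real^'p::finite^'p"
  assumes "dt_interconnection \<Lambda>"
  shows "\<exists>\<alpha>>0. \<forall>(Q :: nat \<Rightarrow> real^'n::finite^'n) (x :: nat \<Rightarrow> real^('p \<times> 'n)).
           (\<forall>k. Q k \<in> Qbar) \<longrightarrow>
           (\<forall>k. x (Suc k) = (mat 1 + kron (\<Lambda> - mat 1) (Q k)) *v x k) \<longrightarrow>
           (\<forall>k. norm (x k) \<le> \<alpha> * norm (x 0))"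
proof -
  define m where "m = CARD('p)"
  from ex_bij_betw_nat_finite[of "UNIV :: 'p set"] obtain g where
    gb0: "bij_betw g {0..<m} (UNIV :: 'p set)" unfolding m_def by auto
  then have gb: "bij_betw g {..<m} (UNIV :: 'p set)" by (simp add: atLeast0LessThan)
  define h where "h = inv_into {..<m} g"
  have hg: "h (g k) = k" if "k<m" for k
    unfolding h_def using gb that by (simp add: bij_betw_def inv_into_f_f)
  have gh: "g (h l) = l" for l
    unfolding h_def using gb by (simp add: bij_betw_def f_inv_into_f)
  have hm: "h l < m" for l
    unfolding h_def using gb by (metis bij_betw_def inv_into_into lessThan_iff UNIV_I)
  have hinj: "h l = h l' \<longleftrightarrow> l = l'" for l l' by (metis gh)
  have nn: "\<And>i j. 0 \<le> \<Lambda>$i$j" and rs: "\<And>i. (\<Sum>j\<in>UNIV. \<Lambda>$i$j) = 1"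
    using assms unfolding dt_interconnection_def by auto
  have reidx: "(\<Sum>k<m. f (g k)) = (\<Sum>l\<in>UNIV. f l)" for f :: "'p \<Rightarrow> 'z::comm_monoid_add"
    by (rule sum.reindex_bij_betw[OF gb])
  define R where "R = Matrix.mat m m (\<lambda>(i,j). \<Lambda>$g i$g j)"
  have Rc: "R \<in> carrier_mat m m" unfolding R_def by simp
  have Rnn: "\<And>i j. i<m \<Longrightarrow> j<m \<Longrightarrow> 0 \<le> R$$(i,j)" unfolding R_def using nn by simp
  have Rrs: "\<And>i. i<m \<Longrightarrow> (\<Sum>j<m. R$$(i,j)) = 1"
  proof -
    fix i assume i: "i<m"
    have "(\<Sum>j<m. R$$(i,j)) = (\<Sum>j<m. \<Lambda>$g i$g j)" unfolding R_def using i by simp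
    also have "\<dots> = 1" using reidx[of "\<lambda>l. \<Lambda>$g i$l"] rs by simp
    finally show "(\<Sum>j<m. R$$(i,j)) = 1" .
  qed
  define A where "A = map_mat complex_of_real R"
  have Ac: "A \<in> carrier_mat m m" unfolding A_def using Rc by simp
  have Abnd: "\<And>k i j. i<m \<Longrightarrow> j<m \<Longrightarrow> cmod ((A ^\<^sub>m k)$$(i,j)) \<le> 1"
    unfolding A_def by (rule stoch_pow_bound[OF Rc Rnn Rrs])
  from spectral_lemma[OF Ac Abnd] obtain S T lam bet where
    Sc: "S \<in> carrier_mat m m" and Tc: "T \<in> carrier_mat m m" and TS: "T * S = 1\<^sub>m m"
    and row: "\<forall>i<m. \<forall>k<m. (S*A)$$(i,k) = lam i * S$$(i,k) + complex_of_real (bet i) * (if Suc i < m then S$$(Suc i,k) else 0)"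
    and c1: "\<forall>i<m. 0 \<le> bet i \<and> cmod (lam i) + bet i \<le> 1"
    and c2: "\<forall>i. Suc i < m \<longrightarrow> cmod (lam (Suc i)) + bet i \<le> 1"
    by blast
  define sc where "sc i l = S$$(i, h l)" for i l
  have rowrel: "(\<lambda>l. \<Sum>l'\<in>UNIV. sc i l' * complex_of_real (\<Lambda>$l'$l)) =
         (\<lambda>l. lam i * sc i l + complex_of_real (bet i) * (if Suc i<m then sc (Suc i) l else 0))"
    if i: "i<m" for i
  proof
    fix l
    have "(\<Sum>l'\<in>UNIV. sc i l' * complex_of_real (\<Lambda>$l'$l)) = (\<Sum>k<m. sc i (g k) * complex_of_real (\<Lambda>$g k$l))"
      using reidx[of "\<lambda>l'. sc i l' * complex_of_real (\<Lambda>$l'$l)"] by simp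
    also have "\<dots> = (\<Sum>k<m. S$$(i,k) * A$$(k, h l))"
      unfolding sc_def A_def R_def using hm[of l] by (intro sum.cong) (auto simp: hg gh)
    also have "\<dots> = (S*A)$$(i, h l)" using mult_entry[OF Sc Ac i hm[of l]] by simp
    also have "\<dots> = lam i * sc i l + complex_of_real (bet i) * (if Suc i<m then sc (Suc i) l else 0)"
      using row i hm[of l] unfolding sc_def by simp
    finally show "(\<Sum>l'\<in>UNIV. sc i l' * complex_of_real (\<Lambda>$l'$l)) = lam i * sc i l + complex_of_real (bet i) * (if Suc i<m then sc (Suc i) l else 0)" .
  qed
  have inv: "complex_of_real (x$(l,c)) = (\<Sum>i<m. T$$(h l, i) * (Lin (sc i) x)$c)"
    for l c and x :: "real^('p \<times> 'n)"
  proof -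
    have "(\<Sum>i<m. T$$(h l, i) * (Lin (sc i) x)$c) = (\<Sum>i<m. \<Sum>l'\<in>UNIV. T$$(h l, i) * (S$$(i, h l') * complex_of_real (x$(l',c))))"
      by (simp add: Lin_def sc_def sum_distrib_left)
    also have "\<dots> = (\<Sum>l'\<in>UNIV. \<Sum>i<m. T$$(h l, i) * (S$$(i, h l') * complex_of_real (x$(l',c))))"
      by (rule sum.swap)
    also have "\<dots> = (\<Sum>l'\<in>UNIV. (T*S)$$(h l, h l') * complex_of_real (x$(l',c)))"
    proof (rule sum.cong[OF refl])
      fix l'
      show "(\<Sum>i<m. T$$(h l, i) * (S$$(i, h l') * complex_of_real (x$(l',c)))) = (T*S)$$(h l, h l') * complex_of_real (x$(l',c))"
        using mult_entry[OF Tc Sc hm[of l] hm[of l']] by (simp add: sum_distrib_right mult.assoc)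
    qed
    also have "\<dots> = (\<Sum>l'\<in>UNIV. (if l = l' then complex_of_real (x$(l',c)) else 0))"
      unfolding TS using hm by (intro sum.cong) (auto simp: hinj)
    also have "\<dots> = complex_of_real (x$(l,c))" by simp
    finally show ?thesis by simp
  qed
  define V where "V x = (\<Sum>i<m. (norm (Lin (sc i) x))^2)" for x :: "real^('p \<times> 'n)"
  define C1 where "C1 = (\<Sum>i<m. \<Sum>l\<in>UNIV. (cmod (sc i l))^2)"
  define C2 where "C2 = (\<Sum>l\<in>UNIV. \<Sum>i<m. (cmod (T$$(h l, i)))^2)"
  have C2nn: "0 \<le> C2" unfolding C2_def by (intro sum_nonneg) auto
  have Vup: "V x \<le> C1 * (norm x)^2" for x
  proof -
    have "V x \<le> (\<Sum>i<m. (\<Sum>l\<in>UNIV. (cmod (sc i l))^2) * (norm x)^2)"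
      unfolding V_def by (intro sum_mono Lin_upper)
    also have "\<dots> = C1 * (norm x)^2" unfolding C1_def by (rule sum_distrib_right[symmetric])
    finally show ?thesis .
  qed
  have Vlow: "(norm x)^2 \<le> C2 * V x" for x
    unfolding V_def C2_def by (rule Lin_lower[OF inv])
  define \<alpha> where "\<alpha> = sqrt (C2 * C1) + 1"
  have C1nn: "0 \<le> C1" unfolding C1_def by (intro sum_nonneg) auto
  have \<alpha>pos: "0 < \<alpha>" unfolding \<alpha>_def using C1nn C2nn by (simp add: add_nonneg_pos)
  show ?thesis
  proof (intro exI[of _ \<alpha>] conjI allI impI \<alpha>pos)
    fix Q :: "nat \<Rightarrow> real^'n^'n" and x :: "nat \<Rightarrow> real^('p \<times> 'n)" and k
    assume Q: "\<forall>k. Q k \<in> Qbar" and rec: "\<forall>k. x (Suc k) = (mat 1 + kron (\<Lambda> - mat 1) (Q k)) *v x k"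
    have dec: "V (x (Suc j)) \<le> V (x j)" for j
      unfolding V_def rec[rule_format] using Q c1 c2
      by (intro V_decr[where lam=lam and bet=bet] rowrel) auto
    have Vk: "V (x k) \<le> V (x 0)"
      by (induction k) (auto intro: order_trans[OF dec])
    have "(norm (x k))^2 \<le> C2 * V (x k)" by (rule Vlow)
    also have "\<dots> \<le> C2 * V (x 0)" using Vk C2nn by (rule mult_left_mono)
    also have "\<dots> \<le> C2 * (C1 * (norm (x 0))^2)" using Vup C2nn by (rule mult_left_mono)
    finally have sq: "(norm (x k))^2 \<le> (sqrt (C2 * C1) * norm (x 0))^2"
      using C2nn C1nn by (auto simp: power_mult_distrib mult.assoc)
    have "norm (x k) \<le> sqrt (C2 * C1) * norm (x 0)"
      using sq by (rule power2_le_imp_le) (use C1nn C2nn in simp)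
    also have "\<dots> \<le> \<alpha> * norm (x 0)" unfolding \<alpha>_def by (simp add: distrib_right)
    finally show "norm (x k) \<le> \<alpha> * norm (x 0)" .
  qed
qed

end
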